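(* Let $(R,B)$ be an EIC problem with problem graph $G$, and let $\mathscr N$ be the set of all neighborhood partitions. Then $$(T)_{(R,B)}\le \min_{(\tilde N_1,\dots,\tilde N_n)\in\mathscr N}\ \sum_{i=1}^n \chi\big(\overline{G|_{\tilde N_i}}\big).$$
   Context: An EIC problem is a pair $(R,B)$ of matrices in $\mathbb{F}_2^{n\times m}$ with disjoint supports (node $u$ needs block $a$ iff $R_{ua}=1$, has it iff $B_{ua}=1$). $P=\{(u,a):R_{ua}=1\}$. The problem graph $G=(V,E)$ has vertices $V=\{v_{(u,a)}:(u,a)\in P\}$ and a directed edge from $v_{(u,a)}$ to $v_{(w,b)}$ iff $B_{ub}=1$ or $a=b$; $G|_S$ denotes the induced subgraph on $S\subseteq V$. Sender neighborhood of node $k$: $N_k=\{v_{(w,b)}\in V:B_{kb}=1\}$. A neighborhood partition is a tuple $(\tilde N_1,\dots,\tilde N_n)$ with $\tilde N_i\subseteq N_i$, pairwise disjoint, union $V$. For a directed graph $H$ (loops disregarded), $\overline H$ has an edge $(x,y)$, $x\ne y$, iff $(x,y)$ is not an edge of $H$; an independent set contains no edge in either direction; $\chi(H)$ is the minimum number of independent sets partitioning the vertices ($0$ for the empty graph). A linear broadcast solution to $(R,B)$ is a tuple $\beta^{(1)},\dots,\beta^{(n)}$, $\beta^{(u)}\in\mathbb{F}_2^{h_u\times m}$, with the $a$-th column of $\beta^{(u)}$ zero whenever $B_{ua}=0$, and for each $(u,a)\in P$, the standard basis vector $\boldsymbol e_a$ lies in the $\mathbb{F}_2$-row span of all $\beta^{(\ell)}$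 together with $\mathrm{diag}(B_u)$ (the diagonal matrix with the $u$-th row of $B$ on its diagonal). It is task-based if for every $(u,a)\in P$ there is $\ell$ with $\boldsymbol e_a$ in the row span of $\beta^{(\ell)}$ together with $\mathrm{diag}(B_u)$. Its length is $\sum_u h_u$; $(T)_{(R,B)}$ is the minimum length of a task-based solution. *)

theory Defs
  imports Main "HOL-Library.Z2" "HOL-Library.Extended_Nat"
begin

text \<open>An n x m matrix over F2 is a function nat => nat => bit,
  of which only entries (u,a) with u < n, a < m matter. A matrix with h rows and
  m columns is a list of h row vectors (nat => bit), of which only entries j < m matter.\<close>

type_synonym f2vec = "nat \<Rightarrow> bit"
type_synonym f2mat = "nat \<Rightarrow> nat \<Rightarrow> bit"

definition EIC_problem :: "nat \<Rightarrow> nat \<Rightarrow> f2mat \<Rightarrow> f2mat \<Rightarrow> bool" where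
  "EIC_problem n m R B \<longleftrightarrow> (\<forall>u<n. \<forall>a<m. \<not> (R u a = 1 \<and> B u a = 1))"

definition demands :: "nat \<Rightarrow> nat \<Rightarrow> f2mat \<Rightarrow> (nat \<times> nat) set" where
  "demands n m R = {(u, a). u < n \<and> a < m \<and> R u a = 1}"

definition G_edge :: "f2mat \<Rightarrow> nat \<times> nat \<Rightarrow> nat \<times> nat \<Rightarrow> bool" where
  "G_edge B x y \<longleftrightarrow> (case x of (u, a) \<Rightarrow> case y of (w, b) \<Rightarrow> B u b = 1 \<or> a = b)"

definition compl_induced_edge :: "('v \<Rightarrow> 'v \<Rightarrow> bool) \<Rightarrow> 'v set \<Rightarrow> 'v \<Rightarrow> 'v \<Rightarrow> bool" where
  "compl_induced_edge E S x y \<longleftrightarrow> x \<in> S \<and> y \<in> S \<and> x \<noteq> y \<and> \<not> E x y"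

definition independent :: "('v \<Rightarrow> 'v \<Rightarrow> bool) \<Rightarrow> 'v set \<Rightarrow> bool" where
  "independent E C \<longleftrightarrow> (\<forall>x\<in>C. \<forall>y\<in>C. \<not> E x y \<and> \<not> E y x)"

definition chi :: "'v set \<Rightarrow> ('v \<Rightarrow> 'v \<Rightarrow> bool) \<Rightarrow> nat" where
  "chi S E = (LEAST k. \<exists>Cs :: 'v set list. length Cs = k
      \<and> (\<forall>i<k. \<forall>j<k. i \<noteq> j \<longrightarrow> Cs ! i \<inter> Cs ! j = {})
      \<and> \<Union> (set Cs) = S \<and> (\<forall>C\<in>set Cs. independent E C))"

definition sender_nbhd :: "nat \<Rightarrow> nat \<Rightarrow> f2mat \<Rightarrow> f2mat \<Rightarrow> nat \<Rightarrow> (nat \<times> nat) set" where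
  "sender_nbhd n m R B k = {(w, b) \<in> demands n m R. B k b = 1}"

definition nbhd_partition :: "nat \<Rightarrow> nat \<Rightarrow> f2mat \<Rightarrow> f2mat \<Rightarrow> (nat \<Rightarrow> (nat \<times> nat) set) \<Rightarrow> bool" where
  "nbhd_partition n m R B N' \<longleftrightarrow>
     (\<forall>i<n. N' i \<subseteq> sender_nbhd n m R B i)
     \<and> (\<forall>i<n. \<forall>j<n. i \<noteq> j \<longrightarrow> N' i \<inter> N' j = {})
     \<and> (\<Union>i<n. N' i) = demands n m R"

definition in_row_span :: "nat \<Rightarrow> f2vec list \<Rightarrow> f2vec \<Rightarrow> bool" where
  "in_row_span m rows v \<longleftrightarrow>
     (\<exists>c :: nat \<Rightarrow> bit. \<forall>j<m. v j = (\<Sum>i<length rows. c i * (rows ! i) j))"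

definition unit_vec :: "nat \<Rightarrow> f2vec" where
  "unit_vec a = (\<lambda>j. if j = a then 1 else 0)"

definition diag_rows :: "nat \<Rightarrow> f2mat \<Rightarrow> nat \<Rightarrow> f2vec list" where
  "diag_rows m B u = map (\<lambda>j. \<lambda>k. if k = j then B u j else 0) [0..<m]"

text \<open>beta u is the list of rows of beta^(u) (so h_u = length (beta u)).\<close>
definition lin_broadcast_sol :: "nat \<Rightarrow> nat \<Rightarrow> f2mat \<Rightarrow> f2mat \<Rightarrow> (nat \<Rightarrow> f2vec list) \<Rightarrow> bool" where
  "lin_broadcast_sol n m R B beta \<longleftrightarrow>
     (\<forall>u<n. \<forall>r\<in>set (beta u). \<forall>a<m. B u a = 0 \<longrightarrow> r a = 0)
     \<and> (\<forall>(u, a)\<in>demands n m R.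
          in_row_span m (concat (map beta [0..<n]) @ diag_rows m B u) (unit_vec a))"

definition task_based :: "nat \<Rightarrow> nat \<Rightarrow> f2mat \<Rightarrow> f2mat \<Rightarrow> (nat \<Rightarrow> f2vec list) \<Rightarrow> bool" where
  "task_based n m R B beta \<longleftrightarrow>
     (\<forall>(u, a)\<in>demands n m R. \<exists>l<n. in_row_span m (beta l @ diag_rows m B u) (unit_vec a))"

definition sol_length :: "nat \<Rightarrow> (nat \<Rightarrow> f2vec list) \<Rightarrow> nat" where
  "sol_length n beta = (\<Sum>u<n. length (beta u))"

text \<open>(T)_(R,B): minimum length of a task-based linear broadcast solution (infinity if none).\<close>
definition T_opt :: "nat \<Rightarrow> nat \<Rightarrow> f2mat \<Rightarrow> f2mat \<Rightarrow> enat" where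
  "T_opt n m R B = (INF beta \<in> {beta. lin_broadcast_sol n m R B beta \<and> task_based n m R B beta}.
                       enat (sol_length n beta))"

end

theory Submission
  imports Defs
begin

lemma key:
  fixes rows :: "f2vec list" and S :: "nat \<Rightarrow> bool"
  assumes p: "p < length rows" "rows ! p = r"
    and v: "\<And>j. j < m \<Longrightarrow> v j = r j + (if S j then B u j else 0)"
  shows "in_row_span m (rows @ diag_rows m B u) v"
  unfolding in_row_span_def
proof (rule exI[of _ "\<lambda>i. if i = p then 1 else if length rows \<le> i \<and> S (i - length rows) then 1 else 0"], intro allI impI)
  fix j assume j: "j < m"
  let ?L = "length rows"
  let ?c = "\<lambda>i. if i = p then 1 else if ?L \<le> i \<and> S (i - ?L) then 1 else (0::bit)"
  let ?R = "rows @ diag_rows m B u"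
  have len: "length ?R = ?L + m" by (simp add: diag_rows_def)
  have split: "{..<?L + m} = {..<?L} \<union> {?L..<?L+m}" by auto
  have s1: "(\<Sum>i<?L. ?c i * (?R ! i) j) = r j"
  proof -
    have "(\<Sum>i<?L. ?c i * (?R ! i) j) = (\<Sum>i<?L. if i = p then r j else 0)"
      by (rule sum.cong) (auto simp: nth_append p)
    also have "\<dots> = r j" using p by simp
    finally show ?thesis .
  qed
  have s2: "(\<Sum>i\<in>{?L..<?L+m}. ?c i * (?R ! i) j) = (if S j then B u j else 0)"
  proof -
    have "(\<Sum>i\<in>{?L..<?L+m}. ?c i * (?R ! i) j) = (\<Sum>k<m. ?c (k + ?L) * (?R ! (k + ?L)) j)"
      by (rule sum.reindex_bij_witness[of _ "\<lambda>k. k + ?L" "\<lambda>i. i - ?L"]) auto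
    also have "\<dots> = (\<Sum>k<m. if k = j then (if S j then B u j else 0) else 0)"
      by (rule sum.cong) (use p in \<open>auto simp: nth_append diag_rows_def\<close>)
    also have "\<dots> = (if S j then B u j else 0)" using j by simp
    finally show ?thesis .
  qed
  have "(\<Sum>i<length ?R. ?c i * (?R ! i) j) = (\<Sum>i<?L. ?c i * (?R ! i) j) + (\<Sum>i\<in>{?L..<?L+m}. ?c i * (?R ! i) j)"
    unfolding len split by (rule sum.union_disjoint) auto
  then show "v j = (\<Sum>i<length ?R. ?c i * (?R ! i) j)" using s1 s2 v[OF j] by simp
qed


definition is_col :: "'v set \<Rightarrow> ('v \<Rightarrow> 'v \<Rightarrow> bool) \<Rightarrow> nat \<Rightarrow> 'v set list \<Rightarrow> bool" where
  "is_col S E k Cs \<longleftrightarrow> length Cs = k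
      \<and> (\<forall>i<k. \<forall>j<k. i \<noteq> j \<longrightarrow> Cs ! i \<inter> Cs ! j = {})
      \<and> \<Union> (set Cs) = S \<and> (\<forall>C\<in>set Cs. independent E C)"

lemma chi_exists:
  assumes "finite S"
  shows "\<exists>Cs. is_col S (compl_induced_edge E S) (chi S (compl_induced_edge E S)) Cs"
proof -
  let ?E = "compl_induced_edge E S"
  obtain xs where xs: "set xs = S" "distinct xs" using assms finite_distinct_list by blast
  have "is_col S ?E (length xs) (map (\<lambda>x. {x}) xs)"
    unfolding is_col_def using xs
    by (auto simp: independent_def compl_induced_edge_def nth_eq_iff_index_eq)
  then have "\<exists>k Cs. is_col S ?E k Cs" by blast
  then have "\<exists>Cs. is_col S ?E (LEAST k. \<exists>Cs. is_col S ?E k Cs) Cs"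
    by (rule LeastI_ex)
  moreover have "chi S ?E = (LEAST k. \<exists>Cs. is_col S ?E k Cs)"
    unfolding chi_def is_col_def by simp
  ultimately show ?thesis by simp
qed

definition rC :: "(nat \<times> nat) set \<Rightarrow> f2vec" where
  "rC C = (\<lambda>j. if \<exists>w. (w, j) \<in> C then 1 else 0)"

lemma decode:
  assumes ind: "independent (compl_induced_edge (G_edge B) S) C" and CS: "C \<subseteq> S"
    and ua: "(u, a) \<in> C"
    and p: "p < length rows" "rows ! p = rC C"
  shows "in_row_span m (rows @ diag_rows m B u) (unit_vec a)"
proof (rule key[OF p, where S = "\<lambda>j. j \<noteq> a \<and> (\<exists>w. (w, j) \<in> C)"])
  fix j assume j: "j < m"
  show "unit_vec a j = rC C j + (if j \<noteq> a \<and> (\<exists>w. (w, j) \<in> C) then B u j else 0)"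
  proof (cases "j = a")
    case True then show ?thesis using ua by (auto simp: unit_vec_def rC_def)
  next
    case False
    show ?thesis
    proof (cases "\<exists>w. (w, j) \<in> C")
      case True
      then obtain w where w: "(w, j) \<in> C" by blast
      have "\<not> compl_induced_edge (G_edge B) S (u, a) (w, j)" using ind ua w unfolding independent_def by blast
      then have "G_edge B (u, a) (w, j)" using CS ua w False unfolding compl_induced_edge_def by auto
      then have "B u j = 1" using False unfolding G_edge_def by auto
      then show ?thesis using True False by (simp add: unit_vec_def rC_def)
    next
      case F2: False
      then show ?thesis using False by (simp add: unit_vec_def rC_def)
    qed
  qed
qed

lemma demands_finite: "finite (demands n m R)"
  by (rule finite_subset[of _ "{..<n} \<times> {..<m}"]) (auto simp: demands_def)

lemma part_bound:
  assumes P: "nbhd_partition n m R B N'"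
  shows "T_opt n m R B \<le> enat (\<Sum>i<n. chi (N' i) (compl_induced_edge (G_edge B) (N' i)))"
proof -
  let ?E = "\<lambda>i. compl_induced_edge (G_edge B) (N' i)"
  let ?k = "\<lambda>i. chi (N' i) (?E i)"
  have fin: "\<And>i. i < n \<Longrightarrow> finite (N' i)"
    using P demands_finite unfolding nbhd_partition_def
    by (metis (no_types, lifting) UN_upper finite_subset lessThan_iff)
  define Cs where "Cs i = (SOME Cs. is_col (N' i) (?E i) (?k i) Cs)" for i
  have Cs: "is_col (N' i) (?E i) (?k i) (Cs i)" if "i < n" for i
    unfolding Cs_def using chi_exists[OF fin[OF that]] by (rule someI_ex)
  define beta where "beta i = map rC (Cs i)" for i
  have dec: "\<exists>p C. p < length (beta i) \<and> beta i ! p = rC C \<and> independent (?E i) C \<and> C \<subseteq> N' i \<and> (u, a) \<in> C"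
    if i: "i < n" and ua: "(u, a) \<in> N' i" for i u a
  proof -
    from Cs[OF i] ua obtain C where C: "C \<in> set (Cs i)" "(u, a) \<in> C" unfolding is_col_def by blast
    then obtain p where p: "p < length (Cs i)" "Cs i ! p = C" by (meson in_set_conv_nth)
    have "independent (?E i) C" "C \<subseteq> N' i" using Cs[OF i] C(1) unfolding is_col_def by auto
    moreover have "p < length (beta i)" "beta i ! p = rC C" using p unfolding beta_def by auto
    ultimately show ?thesis using C(2) by blast
  qed
  have sol: "lin_broadcast_sol n m R B beta"
    unfolding lin_broadcast_sol_def
  proof (intro conjI ballI allI impI)
    fix u r a assume u: "u < n" and r: "r \<in> set (beta u)" and a: "a < m" "B u a = 0"
    then obtain C where C: "C \<in> set (Cs u)" "r = rC C" unfolding beta_def by auto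
    have "C \<subseteq> N' u" using Cs[OF u] C unfolding is_col_def by auto
    have "(w, a) \<notin> C" for w
    proof
      assume "(w, a) \<in> C"
      then have "(w, a) \<in> sender_nbhd n m R B u" using \<open>C \<subseteq> N' u\<close> P u unfolding nbhd_partition_def by blast
      then show False using a by (simp add: sender_nbhd_def)
    qed
    then show "r a = 0" using C by (simp add: rC_def)
  next
    fix x assume x: "x \<in> demands n m R"
    obtain u a where ua: "x = (u, a)" by fastforce
    from x P obtain i where i: "i < n" "(u, a) \<in> N' i" unfolding nbhd_partition_def ua by (metis UN_E lessThan_iff)
    from dec[OF i] obtain p C where pc: "p < length (beta i)" "beta i ! p = rC C"
      "independent (?E i) C" "C \<subseteq> N' i" "(u, a) \<in> C" by blast
    have "rC C \<in> set (concat (map beta [0..<n]))" using pc i by (auto intro!: bexI[of _ i]) (metis nth_mem)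
    then obtain q where q: "q < length (concat (map beta [0..<n]))" "concat (map beta [0..<n]) ! q = rC C"
      by (meson in_set_conv_nth)
    show "case x of (u, a) \<Rightarrow> in_row_span m (concat (map beta [0..<n]) @ diag_rows m B u) (unit_vec a)"
      unfolding ua using decode[OF pc(3,4,5) q] by simp
  qed
  have tb: "task_based n m R B beta"
    unfolding task_based_def
  proof
    fix x assume x: "x \<in> demands n m R"
    obtain u a where ua: "x = (u, a)" by fastforce
    from x P obtain i where i: "i < n" "(u, a) \<in> N' i" unfolding nbhd_partition_def ua by (metis UN_E lessThan_iff)
    from dec[OF i] obtain p C where pc: "p < length (beta i)" "beta i ! p = rC C"
      "independent (?E i) C" "C \<subseteq> N' i" "(u, a) \<in> C" by blast
    show "case x of (u, a) \<Rightarrow> \<exists>l<n. in_row_span m (beta l @ diag_rows m B u) (unit_vec a)"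
      unfolding ua using decode[OF pc(3,4,5,1,2)] i by auto
  qed
  have len: "sol_length n beta = (\<Sum>i<n. ?k i)"
    unfolding sol_length_def beta_def using Cs by (intro sum.cong) (auto simp: is_col_def)
  have "T_opt n m R B \<le> enat (sol_length n beta)"
    unfolding T_opt_def using sol tb by (intro INF_lower) auto
  then show ?thesis using len by simp
qed

theorem lemma4:
  fixes n m :: nat and R B :: f2mat
  assumes "EIC_problem n m R B"
  shows "T_opt n m R B \<le>
    (INF N' \<in> {N'. nbhd_partition n m R B N'}.
       enat (\<Sum>i<n. chi (N' i) (compl_induced_edge (G_edge B) (N' i))))"
  by (rule INF_greatest) (use part_bound in auto)

end
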